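(* For all $1\le a\le n$, $S_a\cdot L(u)=0$, i.e. every coefficient of the formal power series $L(u)$ in $D$ is annihilated by $S_a$.
   Context: Fix $n\ge2$. Let $Q_a(u)$ ($1\le a\le n$, $u\in\mathbb C$) be algebraically independent commuting indeterminates, $\mathcal Q=\mathbb Z[Q_a(u)^{\pm1}]$. Bilinear form of type $B_n$: $(\alpha_a|\alpha_a)=d_a:=2-\delta_{an}$, $(\alpha_a|\alpha_{a+1})=(\alpha_{a+1}|\alpha_a)=-1$ for $1\le a\le n-1$, $(\alpha_a|\alpha_b)=0$ if $|a-b|\ge2$. Put $Y_a(u)=Q_a(u-\frac{d_a}2)/Q_a(u+\frac{d_a}2)$, $Y_0(u)=1$, $\mathcal Y=\mathbb Z[Y_a(u)^{\pm1}]$. Define $z_a(u)=\frac{Y_a(u+a)}{Y_{a-1}(u+a+1)}$, $z_{\bar a}(u)=\frac{Y_{a-1}(u+2n-a)}{Y_a(u+2n-a+1)}$ for $1\le a\le n-1$; $z_n(u)=\frac{Y_n(u+\frac{2n+1}2)Y_n(u+\frac{2n-1}2)}{Y_{n-1}(u+n+1)}$, $z_{\bar n}(u)=\frac{Y_{n-1}(u+n)}{Y_n(u+\frac{2n+3}2)Y_n(u+\frac{2n+1}2)}$, $z_0(u)=\frac{Y_n(u+\frac{2n-1}2)}{Y_n(u+\frac{2n+3}2)}$. Work in the ring of formal power series $\sum_{j\ge0}c_j(u)D^j$ with $c_j(u)\in\mathcal Y$ and $D\,c(u)=c(u+1)D$; define \[ L(u)=(1-z_{\bar1}(u)D^2)\cdots(1-z_{\bar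 n}(u)D^2)\,(1+z_0(u)D^2)^{-1}\,(1-z_n(u)D^2)\cdots(1-z_1(u)D^2), \] where $(1+z_0(u)D^2)^{-1}=\sum_{k\ge0}(-z_0(u)D^2)^k$. Screening: let $A_a(u)=\prod_{b=1}^n\frac{Q_b(u-(\alpha_a|\alpha_b))}{Q_b(u+(\alpha_a|\alpha_b))}$; let $\mathcal S$ be the commutative ring generated over $\mathcal Q$ by symbols $S_a(u)$ subject to $S_a(u+d_a)=A_a(u+\frac{d_a}2)S_a(u)$. $S_a:\mathcal Y\to\mathcal S$ is the additive map obeying the Leibniz rule with $S_a\cdot Y_b(u)=\delta_{ab}Y_b(u)S_b(u)$; it acts on power series in $D$ coefficientwise. *)

theory Defs
  imports Complex_Main "HOL-Library.Poly_Mapping"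
begin

text \<open>The ring Q = Z[Q_a(u)^{+-1}] of Laurent polynomials in the algebraically independent
  indeterminates Q_a(u) (a a natural number, u complex): group ring of the free abelian group
  of exponent vectors.\<close>

type_synonym lmon = "(nat \<times> complex) \<Rightarrow>\<^sub>0 int"
type_synonym lpoly = "lmon \<Rightarrow>\<^sub>0 int"

definition lm :: "lmon \<Rightarrow> lpoly" where
  "lm e = Poly_Mapping.single e 1"

definition Qp :: "nat \<Rightarrow> complex \<Rightarrow> int \<Rightarrow> lpoly" where
  "Qp a u k = lm (Poly_Mapping.single (a, u) k)"

definition dd :: "nat \<Rightarrow> nat \<Rightarrow> complex" where
  "dd n a = (if a = n then 1 else 2)"

text \<open>Bilinear form of type B_n on simple roots (indices 1..n)\<close>
definition Bform :: "nat \<Rightarrow> nat \<Rightarrow> nat \<Rightarrow> int" where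
  "Bform n a b = (if a = b then (if a = n then 1 else 2)
                  else if a = b + 1 \<or> b = a + 1 then -1 else 0)"

text \<open>Y_a(u)^k = (Q_a(u - d_a/2) / Q_a(u + d_a/2))^k, with Y_0 = 1\<close>
definition Yp :: "nat \<Rightarrow> nat \<Rightarrow> complex \<Rightarrow> int \<Rightarrow> lpoly" where
  "Yp n a u k = (if a = 0 then 1
     else lm (Poly_Mapping.single (a, u - dd n a / 2) k + Poly_Mapping.single (a, u + dd n a / 2) (-k)))"

inductive_set Yring :: "nat \<Rightarrow> lpoly set" for n where
  one: "1 \<in> Yring n"
| gen: "1 \<le> a \<Longrightarrow> a \<le> n \<Longrightarrow> Yp n a u 1 \<in> Yring n"
| geninv: "1 \<le> a \<Longrightarrow> a \<le> n \<Longrightarrow> Yp n a u (-1) \<in> Yring n"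
| add: "x \<in> Yring n \<Longrightarrow> y \<in> Yring n \<Longrightarrow> x + y \<in> Yring n"
| neg: "x \<in> Yring n \<Longrightarrow> - x \<in> Yring n"
| mult: "x \<in> Yring n \<Longrightarrow> y \<in> Yring n \<Longrightarrow> x * y \<in> Yring n"

definition Aa :: "nat \<Rightarrow> nat \<Rightarrow> complex \<Rightarrow> lpoly" where
  "Aa n a u = (\<Prod>b\<in>{1..n}. Qp b (u - of_int (Bform n a b)) 1 * Qp b (u + of_int (Bform n a b)) (-1))"

definition zA :: "nat \<Rightarrow> nat \<Rightarrow> complex \<Rightarrow> lpoly" where
  "zA n a u = (if a = n then
       Yp n n (u + (2 * of_nat n + 1) / 2) 1 * Yp n n (u + (2 * of_nat n - 1) / 2) 1
         * Yp n (n - 1) (u + of_nat n + 1) (-1)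
     else Yp n a (u + of_nat a) 1 * Yp n (a - 1) (u + of_nat a + 1) (-1))"

definition zAbar :: "nat \<Rightarrow> nat \<Rightarrow> complex \<Rightarrow> lpoly" where
  "zAbar n a u = (if a = n then
       Yp n (n - 1) (u + of_nat n) 1 * Yp n n (u + (2 * of_nat n + 3) / 2) (-1)
         * Yp n n (u + (2 * of_nat n + 1) / 2) (-1)
     else Yp n (a - 1) (u + 2 * of_nat n - of_nat a) 1
         * Yp n a (u + 2 * of_nat n - of_nat a + 1) (-1))"

definition z0 :: "nat \<Rightarrow> complex \<Rightarrow> lpoly" where
  "z0 n u = Yp n n (u + (2 * of_nat n - 1) / 2) 1 * Yp n n (u + (2 * of_nat n + 3) / 2) (-1)"

text \<open>Formal power series sum_j c_j(u) D^j with D c(u) = c(u+1) D, represented by the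
  coefficient function (j, u) \<mapsto> c_j(u).\<close>
type_synonym 'q dser = "nat \<Rightarrow> complex \<Rightarrow> 'q"

definition dmul :: "'q::comm_ring_1 dser \<Rightarrow> 'q dser \<Rightarrow> 'q dser" where
  "dmul A B = (\<lambda>k u. \<Sum>i\<le>k. A i u * B (k - i) (u + of_nat i))"

definition dunit :: "'q::comm_ring_1 dser" where
  "dunit = (\<lambda>k u. if k = 0 then 1 else 0)"

definition dprod :: "'q::comm_ring_1 dser list \<Rightarrow> 'q dser" where
  "dprod xs = foldr dmul xs dunit"

definition dpow :: "'q::comm_ring_1 dser \<Rightarrow> nat \<Rightarrow> 'q dser" where
  "dpow X m = (dmul X ^^ m) dunit"

definition mono2 :: "(complex \<Rightarrow> 'q::comm_ring_1) \<Rightarrow> 'q dser" where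
  "mono2 c = (\<lambda>k u. if k = 2 then c u else 0)"

definition fac :: "(complex \<Rightarrow> 'q::comm_ring_1) \<Rightarrow> 'q dser" where
  "fac z = (\<lambda>k u. dunit k u - mono2 z k u)"

text \<open>(1 + z(u) D^2)^{-1} = sum_{k>=0} (- z(u) D^2)^k; the k-th term only contributes to
  degree 2k, so the coefficient of D^j is a finite sum over k \<le> j.\<close>
definition ginv :: "(complex \<Rightarrow> 'q::comm_ring_1) \<Rightarrow> 'q dser" where
  "ginv z = (\<lambda>j u. \<Sum>k\<le>j. dpow (mono2 (\<lambda>v. - z v)) k j u)"

definition Lser :: "nat \<Rightarrow> lpoly dser" where
  "Lser n = dmul (dprod (map (\<lambda>a. fac (zAbar n a)) [1..<n+1]))
              (dmul (ginv (z0 n)) (dprod (map (\<lambda>a. fac (zA n a)) (rev [1..<n+1]))))"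

end

theory Submission
  imports Defs
begin


lemma dmul_assoc: "dmul (dmul A B) C = dmul A (dmul B C)"
proof (intro ext)
  fix k u
  define g where "g = (\<lambda>j l. A j u * B l (u + of_nat j) * C (k - (j + l)) (u + of_nat (j + l)))"
  have "dmul (dmul A B) C k u = (\<Sum>i\<le>k. \<Sum>j\<le>i. g j (i - j))"
    unfolding dmul_def g_def sum_distrib_right
    by (intro sum.cong refl) (simp add: mult.assoc)
  also have "\<dots> = (\<Sum>(j,l)\<in>{(j,l). j + l \<le> k}. g j l)"
    by (rule sum.triangle_reindex_eq[symmetric])
  also have "{(j,l). j + l \<le> k} = Sigma {..k} (\<lambda>j. {..k - j})" by auto
  also have "(\<Sum>(j,l)\<in>Sigma {..k} (\<lambda>j. {..k - j}). g j l) = (\<Sum>j\<le>k. \<Sum>l\<le>k-j. g j l)"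
    by (rule sum.Sigma[symmetric]) auto
  also have "\<dots> = dmul A (dmul B C) k u"
    unfolding dmul_def g_def sum_distrib_left
    by (intro sum.cong refl) (simp add: mult.assoc add.assoc)
  finally show "dmul (dmul A B) C k u = dmul A (dmul B C) k u" .
qed

lemma dmul_dunit_right: "dmul A dunit = A"
proof (intro ext)
  fix k u
  have "dmul A dunit k u = (\<Sum>i\<le>k. if i = k then A i u else 0)"
    unfolding dmul_def dunit_def by (intro sum.cong refl) auto
  then show "dmul A dunit k u = A k u" by simp
qed

lemma dmul_dunit_left: "dmul dunit A = A"
proof (intro ext)
  fix k u
  have "dmul dunit A k u = (\<Sum>i\<le>k. if i = 0 then A k u else 0)"
    unfolding dmul_def dunit_def by (intro sum.cong refl) auto
  then show "dmul dunit A k u = A k u" by simp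
qed

lemma dprod_append: "dprod (xs @ ys) = dmul (dprod xs) (dprod ys)"
  by (induction xs) (simp_all add: dprod_def dmul_dunit_left dmul_assoc)

lemma dprod_Cons: "dprod (X # ys) = dmul X (dprod ys)"
  by (simp add: dprod_def)

lemma dprod_pair: "dprod (xs @ [X, Y] @ ys) = dmul (dprod xs) (dmul (dmul X Y) (dprod ys))"
  by (simp only: dprod_append append_Cons append_Nil dprod_Cons dmul_assoc)

lemma dmul_fac_left: "dmul (fac x) B k u = B k u - (if 2 \<le> k then x u * B (k - 2) (u + 2) else 0)"
proof -
  have "dmul (fac x) B k u = (\<Sum>i\<le>k. (if i = 0 then B k u else 0) - (if i = 2 then x u * B (k - 2) (u + 2) else 0))"
    unfolding dmul_def fac_def dunit_def mono2_def by (intro sum.cong refl) (auto simp: algebra_simps)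
  also have "\<dots> = B k u - (if 2 \<le> k then x u * B (k - 2) (u + 2) else 0)"
    by (simp add: sum_subtractf)
  finally show ?thesis .
qed

lemma dmul_fac_right: "dmul A (fac z) k u = A k u - (if 2 \<le> k then A (k - 2) u * z (u + of_nat (k - 2)) else 0)"
proof -
  have "dmul A (fac z) k u = (\<Sum>i\<le>k. (if i = k then A k u else 0) - (if i = k - 2 \<and> 2 \<le> k then A (k - 2) u * z (u + of_nat (k - 2)) else 0))"
    unfolding dmul_def fac_def dunit_def mono2_def by (intro sum.cong refl) (auto simp: algebra_simps)
  also have "\<dots> = A k u - (if 2 \<le> k then A (k - 2) u * z (u + of_nat (k - 2)) else 0)"
    by (simp add: sum_subtractf)
  finally show ?thesis .
qed

lemma dmul_mono2_left: "dmul (mono2 c) B k u = (if 2 \<le> k then c u * B (k - 2) (u + 2) else 0)"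
proof -
  have "dmul (mono2 c) B k u = (\<Sum>i\<le>k. (if i = 2 then c u * B (k - 2) (u + 2) else 0))"
    unfolding dmul_def mono2_def by (intro sum.cong refl) auto
  then show ?thesis by simp
qed

lemma dmul_fac_fac: "dmul (fac x) (fac y) k u =
   (if k = 0 then 1 else if k = 2 then - x u - y u else if k = 4 then x u * y (u + 2) else 0)"
  unfolding dmul_fac_left by (auto simp: fac_def dunit_def mono2_def)

definition Pz :: "(complex \<Rightarrow> 'q::comm_ring_1) \<Rightarrow> nat \<Rightarrow> complex \<Rightarrow> 'q" where
  "Pz c k u = (\<Prod>i<k. c (u + 2 * of_nat i))"

lemma dpow_mono2: "dpow (mono2 c) k j u = (if j = 2 * k then Pz c k u else 0)"
proof (induction k arbitrary: j u)
  case 0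
  then show ?case by (simp add: dpow_def dunit_def Pz_def)
next
  case (Suc k)
  have "dpow (mono2 c) (Suc k) j u = dmul (mono2 c) (dpow (mono2 c) k) j u"
    by (simp add: dpow_def)
  also have "\<dots> = (if 2 \<le> j then c u * (if j - 2 = 2 * k then Pz c k (u + 2) else 0) else 0)"
    by (simp add: dmul_mono2_left Suc)
  also have "\<dots> = (if j = 2 * Suc k then Pz c (Suc k) u else 0)"
  proof -
    have "Pz c (Suc k) u = c u * Pz c k (u + 2)"
      unfolding Pz_def prod.lessThan_Suc_shift
      by (simp add: algebra_simps)
    then show ?thesis by auto
  qed
  finally show ?case .
qed

lemma ginv_eq: "ginv z j u = (if even j then Pz (\<lambda>v. - z v) (j div 2) u else 0)"
proof -
  have "ginv z j u = (\<Sum>k\<le>j. if k = j div 2 \<and> even j then Pz (\<lambda>v. - z v) k u else 0)"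
    unfolding ginv_def dpow_mono2 by (intro sum.cong refl) auto
  then show ?thesis by auto
qed



lemma lm_add: "lm (e + f) = lm e * lm f"
  by (simp add: lm_def mult_single)

lemma lm_zero: "lm 0 = 1"
  by (simp add: lm_def)

lemma Qp_inv: "Qp b x 1 * Qp b x (-1) = 1"
  unfolding Qp_def lm_add[symmetric] single_add[symmetric] by (simp add: lm_zero)

lemma Qp_zero: "Qp b x 0 = 1"
  unfolding Qp_def by (simp add: lm_zero)


lemma Yp_inv: "Yp n b p 1 * Yp n b p (-1) = 1"
proof (cases "b = 0")
  case True then show ?thesis by (simp add: Yp_def)
next
  case False
  have e: "(Poly_Mapping.single A 1 + Poly_Mapping.single B (-1)) + (Poly_Mapping.single A (-1) + Poly_Mapping.single B 1) = (0::lmon)" for A B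
    by (rule poly_mapping_eqI) (simp add: lookup_add lookup_single when_def)
  show ?thesis unfolding Yp_def using False
    by (simp only: if_False minus_minus lm_add[symmetric] e lm_zero)
qed

lemma Yp_Qp: "1 \<le> b \<Longrightarrow> Yp n b p k = Qp b (p - dd n b / 2) k * Qp b (p + dd n b / 2) (-k)"
  unfolding Yp_def Qp_def by (simp add: lm_add)

lemma Yp0: "Yp n 0 p k = 1" by (simp add: Yp_def)

lemma Aa_restrict:
  assumes "1 \<le> a" "a \<le> n"
  shows "Aa n a v = (\<Prod>b\<in>{1..n} \<inter> {a - 1, a, a + 1}. Qp b (v - of_int (Bform n a b)) 1 * Qp b (v + of_int (Bform n a b)) (-1))"
  unfolding Aa_def
proof (rule prod.mono_neutral_right)
  show "\<forall>i\<in>{1..n} - {1..n} \<inter> {a - 1, a, a + 1}.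
       Qp i (v - of_int (Bform n a i)) 1 * Qp i (v + of_int (Bform n a i)) (- 1) = 1"
    by (auto simp: Bform_def Qp_inv)
qed auto

definition qa :: "nat \<Rightarrow> complex \<Rightarrow> lmon" where
  "qa b x = Poly_Mapping.single (b, x) 1"

definition yx :: "nat \<Rightarrow> nat \<Rightarrow> complex \<Rightarrow> lmon" where
  "yx n b p = (if b = 0 then 0 else qa b (p - dd n b / 2) - qa b (p + dd n b / 2))"

lemma single_m1: "Poly_Mapping.single k (- 1 :: int) = - Poly_Mapping.single k 1"
  using single_uminus[of k "1::int"] by simp

lemma Yp_lm1: "Yp n b p 1 = lm (yx n b p)"
  unfolding Yp_def yx_def qa_def by (simp add: single_m1 lm_zero)

lemma Yp_lm2: "Yp n b p (-1) = lm (- yx n b p)"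
  unfolding Yp_def yx_def qa_def by (simp add: single_m1 lm_zero)

lemma Qp_lm1: "Qp b x 1 = lm (qa b x)"
  unfolding Qp_def qa_def by simp

lemma Qp_lm2: "Qp b x (-1) = lm (- qa b x)"
  unfolding Qp_def qa_def by (simp add: single_m1)

lemma lm_cong: "e = f \<Longrightarrow> lm e = lm f" by simp

lemma Aa_n:
  assumes "2 \<le> n"
  shows "Aa n n v = Yp n n (v - 1/2) 1 * Yp n n (v + 1/2) 1 * Yp n (n - 1) v (-1)"
proof -
  have "n - 1 \<noteq> n" "n - 1 + 1 = n" "n - 1 \<noteq> 0" using assms by auto
  have s: "{1..n} \<inter> {n - 1, n, n + 1} = {n - 1, n}" using assms by auto
  have "Aa n n v = Qp (n-1) (v + 1) 1 * Qp (n-1) (v - 1) (-1) * (Qp n (v - 1) 1 * Qp n (v + 1) (-1))"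
    using Aa_restrict[of n n v] assms \<open>n - 1 \<noteq> n\<close> \<open>n - 1 + 1 = n\<close> unfolding s by (simp add: Bform_def)
  then show ?thesis
    using \<open>n - 1 \<noteq> n\<close> \<open>n - 1 \<noteq> 0\<close>
    by (simp only: Yp_lm1 Yp_lm2 Qp_lm1 Qp_lm2 lm_add[symmetric]) (auto simp: yx_def dd_def algebra_simps)
qed

lemma Aa_mid:
  assumes "1 \<le> a" "a + 1 < n"
  shows "Aa n a v = Yp n a (v - 1) 1 * Yp n a (v + 1) 1 * Yp n (a - 1) v (-1) * Yp n (a + 1) v (-1)"
proof (cases "a = 1")
  case True
  have s: "{1..n} \<inter> {a - 1, a, a + 1} = {a, a + 1}" using assms True by auto
  have "Aa n a v = Qp a (v - 2) 1 * Qp a (v + 2) (-1) * (Qp (a+1) (v + 1) 1 * Qp (a+1) (v - 1) (-1))"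
    using Aa_restrict[of a n v] assms True unfolding s by (simp add: Bform_def)
  then show ?thesis
    using assms True
    by (simp only: Yp_lm1 Yp_lm2 Qp_lm1 Qp_lm2 lm_add[symmetric]) (auto simp: yx_def dd_def algebra_simps)
next
  case False
  have s: "{1..n} \<inter> {a - 1, a, a + 1} = {a - 1, a, a + 1}" using assms False by auto
  have "a - 1 \<noteq> a" "a - 1 \<noteq> a + 1" "a - 1 + 1 = a" "a - 1 \<noteq> n" "a \<noteq> n" "a + 1 \<noteq> n" "a - 1 \<noteq> 0"
    using assms False by auto
  then have "Aa n a v = Qp (a-1) (v + 1) 1 * Qp (a-1) (v - 1) (-1) * (Qp a (v - 2) 1 * Qp a (v + 2) (-1) * (Qp (a+1) (v + 1) 1 * Qp (a+1) (v - 1) (-1)))"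
    using Aa_restrict[of a n v] assms unfolding s by (simp add: Bform_def)
  then show ?thesis
    using assms \<open>a - 1 \<noteq> 0\<close> \<open>a - 1 \<noteq> n\<close> \<open>a \<noteq> n\<close> \<open>a + 1 \<noteq> n\<close>
    by (simp only: Yp_lm1 Yp_lm2 Qp_lm1 Qp_lm2 lm_add[symmetric]) (auto simp: yx_def dd_def algebra_simps)
qed

lemma Aa_nm1:
  assumes "2 \<le> n"
  shows "Aa n (n - 1) v = Yp n (n - 1) (v - 1) 1 * Yp n (n - 1) (v + 1) 1 * Yp n (n - 2) v (-1)
      * Yp n n (v - 1/2) (-1) * Yp n n (v + 1/2) (-1)"
proof (cases "n = 2")
  case True
  have s: "{1..n} \<inter> {n - 1 - 1, n - 1, n - 1 + 1} = {1, 2}" using assms True by auto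
  have "Aa n (n - 1) v = Qp 1 (v - 2) 1 * Qp 1 (v + 2) (-1) * (Qp 2 (v + 1) 1 * Qp 2 (v - 1) (-1))"
    using Aa_restrict[of "n - 1" n v] assms True unfolding s by (simp add: Bform_def)
  then show ?thesis
    using assms True
    by (simp only: Yp_lm1 Yp_lm2 Qp_lm1 Qp_lm2 lm_add[symmetric]) (auto simp: yx_def dd_def algebra_simps)
next
  case False
  have s: "{1..n} \<inter> {n - 1 - 1, n - 1, n - 1 + 1} = {n - 2, n - 1, n}" using assms False by auto
  have "n - 2 \<noteq> n - 1" "n - 2 \<noteq> n" "n - 1 \<noteq> n" "n - 2 + 1 = n - 1" "n - 1 + 1 = n" "n - 2 \<noteq> 0" "n - 1 - 1 = n - 2"
    using assms False by auto
  then have "Aa n (n - 1) v = Qp (n-2) (v + 1) 1 * Qp (n-2) (v - 1) (-1) * (Qp (n-1) (v - 2) 1 * Qp (n-1) (v + 2) (-1) * (Qp n (v + 1) 1 * Qp n (v - 1) (-1)))"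
    using Aa_restrict[of "n - 1" n v] assms unfolding s by (simp add: Bform_def)
  then show ?thesis
    using assms \<open>n - 2 \<noteq> n\<close> \<open>n - 1 \<noteq> n\<close> \<open>n - 2 \<noteq> 0\<close>
    by (simp only: Yp_lm1 Yp_lm2 Qp_lm1 Qp_lm2 lm_add[symmetric]) (auto simp: yx_def dd_def algebra_simps)
qed



locale scr =
  fixes n a :: nat
    and phi :: "lpoly \<Rightarrow> 'r::comm_ring_1"
    and S :: "nat \<Rightarrow> complex \<Rightarrow> 'r"
    and Sa :: "lpoly \<Rightarrow> 'r"
  assumes n2: "n \<ge> 2"
    and a1: "1 \<le> a" and an: "a \<le> n"
    and phi_one: "phi 1 = 1"
    and phi_add: "\<And>x y. phi (x + y) = phi x + phi y"
    and phi_mult: "\<And>x y. phi (x * y) = phi x * phi y"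
    and S_rel: "\<And>b u. 1 \<le> b \<Longrightarrow> b \<le> n \<Longrightarrow>
                  S b (u + dd n b) = phi (Aa n b (u + dd n b / 2)) * S b u"
    and Sa_add: "\<And>x y. x \<in> Yring n \<Longrightarrow> y \<in> Yring n \<Longrightarrow> Sa (x + y) = Sa x + Sa y"
    and Sa_leibniz: "\<And>x y. x \<in> Yring n \<Longrightarrow> y \<in> Yring n \<Longrightarrow>
                  Sa (x * y) = Sa x * phi y + phi x * Sa y"
    and Sa_gen: "\<And>b u. 1 \<le> b \<Longrightarrow> b \<le> n \<Longrightarrow>
                  Sa (Yp n b u 1) = (if b = a then phi (Yp n b u 1) * S b u else 0)"
begin

lemma phi_zero: "phi 0 = 0"
  using phi_add[of 0 0] by simp

lemma phi_neg: "phi (- x) = - phi x"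
  using phi_add[of x "- x"] phi_zero by (metis add.commute eq_neg_iff_add_eq_0 right_minus)

lemma phi_diff: "phi (x - y) = phi x - phi y"
  using phi_add[of x "- y"] phi_neg by simp

lemma Y_zero: "0 \<in> Yring n"
  using Yring.add[OF Yring.one Yring.neg[OF Yring.one]] by simp

lemma Y_diff: "x \<in> Yring n \<Longrightarrow> y \<in> Yring n \<Longrightarrow> x - y \<in> Yring n"
  using Yring.add[OF _ Yring.neg] by (metis diff_conv_add_uminus)

lemma Sa_zero: "Sa 0 = 0"
  using Sa_add[OF Y_zero Y_zero] by simp

lemma Sa_one: "Sa 1 = 0"
  using Sa_leibniz[OF Yring.one Yring.one] phi_one by simp

lemma Sa_neg: "x \<in> Yring n \<Longrightarrow> Sa (- x) = - Sa x"
proof -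
  assume x: "x \<in> Yring n"
  have "Sa x + Sa (- x) = 0" using Sa_add[OF x Yring.neg[OF x]] Sa_zero by simp
  then show ?thesis by (metis add.commute eq_neg_iff_add_eq_0)
qed

lemma Sa_diff: "x \<in> Yring n \<Longrightarrow> y \<in> Yring n \<Longrightarrow> Sa (x - y) = Sa x - Sa y"
  using Sa_add[OF _ Yring.neg, of x y] Sa_neg[of y] by simp

lemma Y_sum: "(\<And>i. i \<in> I \<Longrightarrow> f i \<in> Yring n) \<Longrightarrow> sum f I \<in> Yring n"
  by (induction I rule: infinite_finite_induct) (auto simp: Y_zero intro: Yring.add)

lemma Y_prod: "(\<And>i. i \<in> I \<Longrightarrow> f i \<in> Yring n) \<Longrightarrow> prod f I \<in> Yring n"
  by (induction I rule: infinite_finite_induct) (auto intro: Yring.one Yring.mult)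

lemma Sa_sum: "(\<And>i. i \<in> I \<Longrightarrow> f i \<in> Yring n) \<Longrightarrow> Sa (sum f I) = (\<Sum>i\<in>I. Sa (f i))"
proof (induction I rule: infinite_finite_induct)
  case (insert x F)
  then show ?case by (simp add: Sa_add Y_sum)
qed (auto simp: Sa_zero)

definition ld :: "lpoly \<Rightarrow> 'r \<Rightarrow> bool" where
  "ld x g \<longleftrightarrow> x \<in> Yring n \<and> Sa x = phi x * g"

definition ys :: "nat \<Rightarrow> complex \<Rightarrow> 'r" where
  "ys b p = (if b = a then S a p else 0)"

lemma ld_one: "ld 1 0"
  by (simp add: ld_def Yring.one Sa_one)

lemma ld_mult: "ld x g \<Longrightarrow> ld y h \<Longrightarrow> ld (x * y) (g + h)"
  unfolding ld_def by (auto simp: Sa_leibniz phi_mult algebra_simps intro: Yring.mult)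

lemma ld_neg: "ld x g \<Longrightarrow> ld (- x) g"
  unfolding ld_def by (auto simp: Sa_neg phi_neg intro: Yring.neg)

lemma ld_Y: "ld x g \<Longrightarrow> x \<in> Yring n"
  by (simp add: ld_def)

lemma ld_Sa: "ld x g \<Longrightarrow> Sa x = phi x * g"
  by (simp add: ld_def)

lemma ld_cong: "ld x g \<Longrightarrow> g = h \<Longrightarrow> ld x h" by simp

lemma ld_Yp1: "b \<le> n \<Longrightarrow> ld (Yp n b p 1) (ys b p)"
proof (cases "b = 0")
  case True
  then show ?thesis using a1 by (simp add: Yp0 ys_def ld_one)
next
  case False
  assume "b \<le> n"
  then show ?thesis using False Sa_gen[of b p] Yring.gen[of b n p]
    by (auto simp: ld_def ys_def)
qed

lemma phi_Yp_inv: "phi (Yp n b p 1) * phi (Yp n b p (-1)) = 1"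
  using phi_mult[of "Yp n b p 1" "Yp n b p (-1)"] by (simp add: Yp_inv phi_one)

lemma Yp2_Y: "b \<le> n \<Longrightarrow> Yp n b p (-1) \<in> Yring n"
  by (cases "b = 0") (auto simp: Yp0 intro: Yring.one Yring.geninv)

lemma ld_Yp2: "b \<le> n \<Longrightarrow> ld (Yp n b p (-1)) (- ys b p)"
proof -
  assume b: "b \<le> n"
  let ?y = "Yp n b p 1" and ?z = "Yp n b p (-1)"
  have y: "?y \<in> Yring n" "Sa ?y = phi ?y * ys b p" using ld_Yp1[OF b] by (auto simp: ld_def)
  have z: "?z \<in> Yring n" using Yp2_Y[OF b] .
  have "0 = Sa (?y * ?z)" using Yp_inv[of n b p] Sa_one by simp
  also have "\<dots> = Sa ?y * phi ?z + phi ?y * Sa ?z" using Sa_leibniz y z by simp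
  finally have e: "0 = phi ?y * ys b p * phi ?z + phi ?y * Sa ?z" using y by simp
  have "phi ?z * (phi ?y * Sa ?z) = (phi ?y * phi ?z) * Sa ?z" by (simp add: ac_simps)
  then have "Sa ?z = phi ?z * (phi ?y * Sa ?z)" using phi_Yp_inv[of b p] by simp
  also have "phi ?y * Sa ?z = - (phi ?y * ys b p * phi ?z)" using e by (metis add.commute neg_eq_iff_add_eq_0)
  then have "phi ?z * (phi ?y * Sa ?z) = phi ?z * (- (phi ?y * ys b p * phi ?z))" by simp
  also have "\<dots> = phi ?z * (- ys b p)" using phi_Yp_inv[of b p] by (simp add: algebra_simps)
  finally show ?thesis using z by (simp add: ld_def)
qed

lemma ld_prod: "(\<And>i. i < (k::nat) \<Longrightarrow> ld (f i) (g i)) \<Longrightarrow> ld (\<Prod>i<k. f i) (\<Sum>i<k. g i)"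
  by (induction k) (auto simp: ld_one intro: ld_mult)

lemma ld_sign: "ld x g \<Longrightarrow> ld ((-1) ^ k * x) g"
  by (cases "even k") (auto intro: ld_neg)

definition yv :: "lpoly dser \<Rightarrow> bool" where
  "yv A \<longleftrightarrow> (\<forall>k u. A k u \<in> Yring n)"

definition flat :: "lpoly dser \<Rightarrow> bool" where
  "flat A \<longleftrightarrow> yv A \<and> (\<forall>k u. Sa (A k u) = 0)"

lemma yv_dmul: "yv A \<Longrightarrow> yv B \<Longrightarrow> yv (dmul A B)"
  unfolding yv_def dmul_def by (auto intro!: Y_sum Yring.mult)

lemma flat_dmul: "flat A \<Longrightarrow> flat B \<Longrightarrow> flat (dmul A B)"
  unfolding flat_def
proof (intro conjI allI)
  assume a: "yv A \<and> (\<forall>k u. Sa (A k u) = 0)" and b: "yv B \<and> (\<forall>k u. Sa (B k u) = 0)"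
  then show "yv (dmul A B)" by (simp add: yv_dmul)
  fix k u
  show "Sa (dmul A B k u) = 0"
    using a b unfolding dmul_def yv_def
    by (simp add: Sa_sum Yring.mult Sa_leibniz)
qed

lemma yv_dunit: "yv dunit"
  unfolding yv_def dunit_def by (auto simp: Yring.one Y_zero)

lemma flat_dunit: "flat dunit"
  unfolding flat_def using yv_dunit by (simp add: dunit_def Sa_one Sa_zero)

lemma flat_dprod: "(\<And>x. x \<in> set xs \<Longrightarrow> flat x) \<Longrightarrow> flat (dprod xs)"
  by (induction xs) (auto simp: dprod_def flat_dunit intro: flat_dmul)

lemma flat_dprod_pair: "(\<And>x. x \<in> set xs \<Longrightarrow> flat x) \<Longrightarrow> (\<And>x. x \<in> set zs \<Longrightarrow> flat x) \<Longrightarrow>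
   flat (dmul X Y) \<Longrightarrow> flat (dprod (xs @ [X, Y] @ zs))"
  unfolding dprod_pair by (rule flat_dmul[OF flat_dprod flat_dmul[OF _ flat_dprod]]) auto

lemma yv_fac: "(\<And>u. z u \<in> Yring n) \<Longrightarrow> yv (fac z)"
proof -
  assume z: "\<And>u. z u \<in> Yring n"
  have "fac z k u \<in> Yring n" for k u
    unfolding fac_def dunit_def mono2_def using z Yring.neg[OF z] Yring.one Y_zero by auto
  then show ?thesis unfolding yv_def by blast
qed

lemma flat_fac: "(\<And>u. ld (z u) 0) \<Longrightarrow> flat (fac z)"
proof -
  assume z: "\<And>u. ld (z u) 0"
  have y: "yv (fac z)" using z by (intro yv_fac ld_Y)
  have "Sa (fac z k u) = 0" for k u
    unfolding fac_def dunit_def mono2_def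
    using z[THEN ld_Y] z[THEN ld_Sa] by (auto simp: Sa_zero Sa_one Sa_neg)
  then show ?thesis using y unfolding flat_def by blast
qed

lemma yv_ginv: "(\<And>u. z u \<in> Yring n) \<Longrightarrow> yv (ginv z)"
proof -
  assume z: "\<And>u. z u \<in> Yring n"
  have "Pz (\<lambda>v. - z v) k u \<in> Yring n" for k u
    unfolding Pz_def by (rule Y_prod) (rule Yring.neg[OF z])
  then show ?thesis unfolding yv_def ginv_eq by (auto simp: Y_zero)
qed

lemma flat_ginv: "(\<And>u. ld (z u) 0) \<Longrightarrow> flat (ginv z)"
proof -
  assume z: "\<And>u. ld (z u) 0"
  have "ld (Pz (\<lambda>v. - z v) k u) 0" for k u
    unfolding Pz_def using ld_prod[of k "\<lambda>i. - z (u + 2 * of_nat i)" "\<lambda>i. 0"] z ld_neg by simp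
  then have "ginv z k u \<in> Yring n \<and> Sa (ginv z k u) = 0" for k u
    unfolding ginv_eq using ld_Y ld_Sa[of "Pz (\<lambda>v. - z v) (k div 2) u" 0] by (auto simp: Y_zero Sa_zero)
  then show ?thesis unfolding flat_def yv_def by blast
qed

end


lemma I1_mid:
  assumes "1 \<le> a" "a + 1 < n"
  shows "zA n a u = zA n (a+1) u * Aa n a (u + of_nat a + 1)"
proof -
  have "a \<noteq> n" "a + 1 \<noteq> n" using assms by auto
  then show ?thesis
    unfolding zA_def Aa_mid[OF assms]
    by (simp only: if_False Yp_lm1 Yp_lm2 lm_add[symmetric]) (rule lm_cong, simp add: algebra_simps)
qed

lemma I1_top:
  assumes "1 \<le> a" "a + 1 = n"
  shows "zA n a u = zA n (a+1) u * Aa n a (u + of_nat a + 1)"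
proof -
  have n: "n = a + 1" using assms by simp
  have A: "Aa n a v = Yp n a (v - 1) 1 * Yp n a (v + 1) 1 * Yp n (a - 1) v (-1)
      * Yp n n (v - 1/2) (-1) * Yp n n (v + 1/2) (-1)" for v
    using Aa_nm1[of n v] assms by (simp add: n)
  have p1: "u + (2 * of_nat n + 1) / 2 = u + of_nat a + 1 + 1/2"
    and p2: "u + (2 * of_nat n - 1) / 2 = u + of_nat a + 1 - 1/2"
    and p3: "u + of_nat n + 1 = u + of_nat a + 1 + 1"
    by (simp_all add: field_simps n)
  have z1: "zA n (a+1) u = Yp n n (u + of_nat a + 1 + 1/2) 1 * Yp n n (u + of_nat a + 1 - 1/2) 1 * Yp n a (u + of_nat a + 1 + 1) (-1)"
    unfolding zA_def using assms by (simp only: if_True p1 p2 p3) (simp add: n)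
  have "a \<noteq> n" using assms by auto
  then show ?thesis
    unfolding z1 A unfolding zA_def
    apply (simp only: if_False Yp_lm1 Yp_lm2 lm_add[symmetric])
    apply (rule lm_cong)
    apply (simp add: algebra_simps)
    done
qed

lemma I2_mid:
  assumes "1 \<le> a" "a + 1 < n"
  shows "zAbar n (a+1) u = zAbar n a u * Aa n a (u + 2 * of_nat n - of_nat a)"
proof -
  have "a \<noteq> n" "a + 1 \<noteq> n" using assms by auto
  then show ?thesis
    unfolding zAbar_def Aa_mid[OF assms]
    by (simp only: if_False Yp_lm1 Yp_lm2 lm_add[symmetric]) (rule lm_cong, simp add: algebra_simps)
qed

lemma I2_top:
  assumes "1 \<le> a" "a + 1 = n"
  shows "zAbar n (a+1) u = zAbar n a u * Aa n a (u + 2 * of_nat n - of_nat a)"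
proof -
  have n: "n = a + 1" using assms by simp
  have A: "Aa n a v = Yp n a (v - 1) 1 * Yp n a (v + 1) 1 * Yp n (a - 1) v (-1)
      * Yp n n (v - 1/2) (-1) * Yp n n (v + 1/2) (-1)" for v
    using Aa_nm1[of n v] assms by (simp add: n)
  have p1: "u + (2 * of_nat n + 1) / 2 = u + of_nat a + 2 - 1/2"
    and p2: "u + (2 * of_nat n + 3) / 2 = u + of_nat a + 2 + 1/2"
    and p3: "u + of_nat n = u + of_nat a + 2 - 1"
    and p4: "u + 2 * of_nat n - of_nat a = u + of_nat a + 2"
    and p5: "u + 2 * of_nat n - of_nat a + 1 = u + of_nat a + 2 + 1"
    by (simp_all add: field_simps n)
  have z1: "zAbar n (a+1) u = Yp n a (u + of_nat a + 2 - 1) 1 * Yp n n (u + of_nat a + 2 + 1/2) (-1) * Yp n n (u + of_nat a + 2 - 1/2) (-1)"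
    unfolding zAbar_def using assms by (simp only: if_True p1 p2 p3) (simp add: n)
  have "a \<noteq> n" using assms by auto
  then show ?thesis
    unfolding z1 A unfolding zAbar_def
    apply (simp only: if_False p4 p5 Yp_lm1 Yp_lm2 lm_add[symmetric])
    apply (rule lm_cong)
    apply (simp add: algebra_simps)
    done
qed

definition cc :: "nat \<Rightarrow> complex" where "cc n = (2 * of_nat n - 1) / 2"
definition Wl :: "nat \<Rightarrow> complex \<Rightarrow> lpoly" where "Wl n v = Yp n n (v + cc n) 1"
definition Wil :: "nat \<Rightarrow> complex \<Rightarrow> lpoly" where "Wil n v = Yp n n (v + cc n) (-1)"
definition Yl :: "nat \<Rightarrow> complex \<Rightarrow> lpoly" where "Yl n v = Yp n (n - 1) v 1"
definition Yil :: "nat \<Rightarrow> complex \<Rightarrow> lpoly" where "Yil n v = Yp n (n - 1) v (-1)"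

lemma z0_W: "z0 n u = Wl n u * Wil n (u + 2)"
proof -
  have e: "u + (2 * of_nat n + 3) / 2 = u + 2 + cc n" "u + (2 * of_nat n - 1) / 2 = u + cc n"
    by (simp_all add: cc_def field_simps)
  show ?thesis unfolding z0_def Wl_def Wil_def by (simp only: e)
qed

lemma zAn_W: "zA n n u = Wl n (u + 1) * Wl n u * Yil n (u + of_nat n + 1)"
proof -
  have e: "u + (2 * of_nat n + 1) / 2 = u + 1 + cc n" "u + (2 * of_nat n - 1) / 2 = u + cc n"
    by (simp_all add: cc_def field_simps)
  show ?thesis unfolding zA_def Wl_def Yil_def by (simp only: e if_True simp_thms(6))
qed

lemma zAbarn_W: "zAbar n n u = Yl n (u + of_nat n) * Wil n (u + 2) * Wil n (u + 1)"
proof -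
  have e: "u + (2 * of_nat n + 1) / 2 = u + 1 + cc n" "u + (2 * of_nat n + 3) / 2 = u + 2 + cc n"
    by (simp_all add: cc_def field_simps)
  show ?thesis unfolding zAbar_def Wil_def Yl_def by (simp only: e if_True simp_thms(6))
qed

lemma Aan_W: "2 \<le> n \<Longrightarrow> Aa n n (v + cc n + 1/2) = Wl n v * Wl n (v + 1) * Yil n (v + of_nat n)"
proof -
  assume n: "2 \<le> n"
  have e: "v + cc n + 1/2 = v + of_nat n" "v + of_nat n - 1/2 = v + cc n" "v + of_nat n + 1/2 = v + 1 + cc n"
    by (simp_all add: cc_def field_simps)
  show ?thesis unfolding Aa_n[OF n] Wl_def Yil_def by (simp only: e)
qed

lemma W_inv: "Wl n v * Wil n v = 1"
  unfolding Wl_def Wil_def by (rule Yp_inv)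

lemma Yl_inv: "Yl n v * Yil n v = 1"
  unfolding Yl_def Yil_def by (rule Yp_inv)

lemma Pz_W: "Pz (z0 n) k v = Wl n v * Wil n (v + 2 * of_nat k)"
proof (induction k)
  case 0
  then show ?case by (simp add: Pz_def W_inv)
next
  case (Suc k)
  have "Pz (z0 n) (Suc k) v = Pz (z0 n) k v * z0 n (v + 2 * of_nat k)"
    by (simp add: Pz_def)
  also have "\<dots> = Wl n v * (Wl n (v + 2 * of_nat k) * Wil n (v + 2 * of_nat k)) * Wil n (v + 2 * of_nat k + 2)"
    unfolding Suc z0_W by (simp add: ac_simps)
  also have "\<dots> = Wl n v * Wil n (v + 2 * of_nat (Suc k))"
    by (simp only: W_inv mult_1_right) (simp add: algebra_simps)
  finally show ?case .
qed

lemma Wl_lm: "Wl n v = lm (yx n n (v + cc n))" unfolding Wl_def by (rule Yp_lm1)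
lemma Wil_lm: "Wil n v = lm (- yx n n (v + cc n))" unfolding Wil_def by (rule Yp_lm2)
lemma Yl_lm: "Yl n v = lm (yx n (n - 1) v)" unfolding Yl_def by (rule Yp_lm1)
lemma Yil_lm: "Yil n v = lm (- yx n (n - 1) v)" unfolding Yil_def by (rule Yp_lm2)

lemmas W_lms = Wl_lm Wil_lm Yl_lm Yil_lm lm_add[symmetric]

lemma T_ids:
  fixes u p :: complex
  assumes n: "2 \<le> n"
  defines "T1 \<equiv> Wl n u * Wil n (p + 4)"
    and "T2 \<equiv> zAbar n n u * (Wl n (u + 2) * Wil n (p + 4))"
    and "T3 \<equiv> Wl n u * Wil n (p + 2) * zA n n (p + 2)"
    and "T4 \<equiv> zAbar n n u * (Wl n (u + 2) * Wil n (p + 2)) * zA n n (p + 2)"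
    and "A0 \<equiv> Aa n n (u + cc n + 1/2)"
    and "A1 \<equiv> Aa n n (p + 3 + cc n + 1/2)"
  shows "T1 = T2 * A0" "T3 = T2 * A0 * A1" "T4 = T2 * A1"
  unfolding assms Aan_W[OF n] zAn_W zAbarn_W
  by (simp_all only: W_lms, (rule lm_cong, simp add: algebra_simps)+)

lemma T_ids1:
  assumes n: "2 \<le> n"
  shows "Pz (z0 n) 1 u = zAbar n n u * Aa n n (u + cc n + 1/2)"
    "zA n n u = zAbar n n u * Aa n n (u + cc n + 1/2) * Aa n n (u + 1 + cc n + 1/2)"
  unfolding Pz_W Aan_W[OF n] zAn_W zAbarn_W
  by (simp_all only: W_lms, (rule lm_cong, simp add: algebra_simps)+)



context scr begin

lemma ld_zA: "1 \<le> b \<Longrightarrow> b < n \<Longrightarrow> ld (zA n b u) (ys b (u + of_nat b) - ys (b - 1) (u + of_nat b + 1))"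
proof -
  assume b: "1 \<le> b" "b < n"
  then have e: "zA n b u = Yp n b (u + of_nat b) 1 * Yp n (b - 1) (u + of_nat b + 1) (-1)"
    by (simp add: zA_def)
  show ?thesis unfolding e by (rule ld_cong[OF ld_mult[OF ld_Yp1 ld_Yp2]]) (use b in auto)
qed

lemma ld_zAn: "ld (zA n n u) (ys n (u + (2 * of_nat n + 1) / 2) + ys n (u + (2 * of_nat n - 1) / 2) - ys (n - 1) (u + of_nat n + 1))"
proof -
  have e: "zA n n u = Yp n n (u + (2 * of_nat n + 1) / 2) 1 * Yp n n (u + (2 * of_nat n - 1) / 2) 1
         * Yp n (n - 1) (u + of_nat n + 1) (-1)"
    by (simp add: zA_def)
  show ?thesis unfolding e by (rule ld_cong[OF ld_mult[OF ld_mult[OF ld_Yp1 ld_Yp1] ld_Yp2]]) auto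
qed

lemma ld_zAbar: "1 \<le> b \<Longrightarrow> b < n \<Longrightarrow> ld (zAbar n b u) (ys (b - 1) (u + 2 * of_nat n - of_nat b) - ys b (u + 2 * of_nat n - of_nat b + 1))"
proof -
  assume b: "1 \<le> b" "b < n"
  then have e: "zAbar n b u = Yp n (b - 1) (u + 2 * of_nat n - of_nat b) 1 * Yp n b (u + 2 * of_nat n - of_nat b + 1) (-1)"
    by (simp add: zAbar_def)
  show ?thesis unfolding e by (rule ld_cong[OF ld_mult[OF ld_Yp1 ld_Yp2]]) (use b in auto)
qed

lemma ld_zAbarn: "ld (zAbar n n u) (ys (n - 1) (u + of_nat n) - ys n (u + (2 * of_nat n + 3) / 2) - ys n (u + (2 * of_nat n + 1) / 2))"
proof -
  have e: "zAbar n n u = Yp n (n - 1) (u + of_nat n) 1 * Yp n n (u + (2 * of_nat n + 3) / 2) (-1)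
         * Yp n n (u + (2 * of_nat n + 1) / 2) (-1)"
    by (simp add: zAbar_def)
  show ?thesis unfolding e by (rule ld_cong[OF ld_mult[OF ld_mult[OF ld_Yp1 ld_Yp2] ld_Yp2]]) auto
qed

lemma ld_z0: "ld (z0 n u) (ys n (u + (2 * of_nat n - 1) / 2) - ys n (u + (2 * of_nat n + 3) / 2))"
  unfolding z0_def by (rule ld_cong[OF ld_mult[OF ld_Yp1 ld_Yp2]]) auto

lemma flat_fzA: "1 \<le> b \<Longrightarrow> b \<le> n \<Longrightarrow> a \<noteq> b \<Longrightarrow> a + 1 \<noteq> b \<Longrightarrow> flat (fac (zA n b))"
proof (rule flat_fac)
  fix u assume b: "1 \<le> b" "b \<le> n" "a \<noteq> b" "a + 1 \<noteq> b"
  show "ld (zA n b u) 0"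
  proof (cases "b = n")
    case True
    have "n - 1 \<noteq> a" using b True by auto
    then show ?thesis using True ld_zAn[of u] b by (auto simp: ys_def elim: ld_cong)
  next
    case False
    have "b - 1 \<noteq> a" using b by auto
    then show ?thesis using False ld_zA[of b u] b by (auto simp: ys_def elim: ld_cong)
  qed
qed

lemma flat_fzAbar: "1 \<le> b \<Longrightarrow> b \<le> n \<Longrightarrow> a \<noteq> b \<Longrightarrow> a + 1 \<noteq> b \<Longrightarrow> flat (fac (zAbar n b))"
proof (rule flat_fac)
  fix u assume b: "1 \<le> b" "b \<le> n" "a \<noteq> b" "a + 1 \<noteq> b"
  show "ld (zAbar n b u) 0"
  proof (cases "b = n")
    case True
    have "n - 1 \<noteq> a" using b True by auto
    then show ?thesis using True ld_zAbarn[of u] b by (auto simp: ys_def elim: ld_cong)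
  next
    case False
    have "b - 1 \<noteq> a" using b by auto
    then show ?thesis using False ld_zAbar[of b u] b by (auto simp: ys_def elim: ld_cong)
  qed
qed

lemma flat_G: "a \<noteq> n \<Longrightarrow> flat (ginv (z0 n))"
  by (rule flat_ginv) (use ld_z0 in \<open>auto simp: ys_def elim: ld_cong\<close>)

lemma Sa_coef2: "x \<in> Yring n \<Longrightarrow> y \<in> Yring n \<Longrightarrow> Sa (- x - y) = - Sa x - Sa y"
  using Sa_diff[OF Yring.neg] Sa_neg by simp

lemma pairR:
  assumes "a < n"
  shows "flat (dmul (fac (zA n (a + 1))) (fac (zA n a)))"
proof -
  have an': "a \<noteq> n" "a - 1 \<noteq> a" using assms a1 by auto
  have ldx: "ld (zA n (a + 1) u) (- S a (u + of_nat a + 2))" for u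
  proof (cases "a + 1 < n")
    case True
    show ?thesis
      by (rule ld_cong[OF ld_zA[of "a+1" u]]) (use True in \<open>simp_all add: ys_def algebra_simps\<close>)
  next
    case False
    then have n: "n = a + 1" using assms by simp
    have e: "a + 1 = n" using n by simp
    show ?thesis unfolding e
      by (rule ld_cong[OF ld_zAn[of u]]) (use an' in \<open>simp_all add: ys_def algebra_simps n\<close>)
  qed
  have ldy: "ld (zA n a u) (S a (u + of_nat a))" for u
    by (rule ld_cong[OF ld_zA[of a u]]) (use an' a1 assms in \<open>simp_all add: ys_def\<close>)
  have srel: "S a (u + of_nat a + 2) = phi (Aa n a (u + of_nat a + 1)) * S a (u + of_nat a)" for u
    using S_rel[of a "u + of_nat a"] a1 an an' by (simp add: dd_def)
  have I1: "zA n a u = zA n (a+1) u * Aa n a (u + of_nat a + 1)" for u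
    using I1_mid[of a n u] I1_top[of a n u] a1 assms by (cases "a + 1 < n") auto
  have yv: "yv (dmul (fac (zA n (a + 1))) (fac (zA n a)))"
    by (intro yv_dmul yv_fac ld_Y[OF ldx] ld_Y[OF ldy])
  have "Sa (dmul (fac (zA n (a + 1))) (fac (zA n a)) k u) = 0" for k u
  proof -
    have "Sa (- zA n (a + 1) u - zA n a u) = - Sa (zA n (a + 1) u) - Sa (zA n a u)"
      by (rule Sa_coef2[OF ld_Y[OF ldx] ld_Y[OF ldy]])
    also have "\<dots> = phi (zA n (a + 1) u) * S a (u + of_nat a + 2) - phi (zA n a u) * S a (u + of_nat a)"
      unfolding ld_Sa[OF ldx] ld_Sa[OF ldy] by simp
    also have "\<dots> = 0"
      unfolding srel I1[of u] phi_mult by (simp add: algebra_simps)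
    finally have c2: "Sa (- zA n (a + 1) u - zA n a u) = 0" .
    have c4: "Sa (zA n (a + 1) u * zA n a (u + 2)) = 0"
      using ld_Sa[OF ld_mult[OF ldx[of u] ldy[of "u + 2"]]] by (simp add: algebra_simps)
    show ?thesis unfolding dmul_fac_fac using c2 c4 by (simp add: Sa_one Sa_zero)
  qed
  then show ?thesis using yv unfolding flat_def by blast
qed

lemma pairL:
  assumes "a < n"
  shows "flat (dmul (fac (zAbar n a)) (fac (zAbar n (a + 1))))"
proof -
  have an': "a \<noteq> n" "a - 1 \<noteq> a" using assms a1 by auto
  have ldx: "ld (zAbar n a u) (- S a (u + 2 * of_nat n - of_nat a + 1))" for u
    by (rule ld_cong[OF ld_zAbar[of a u]]) (use an' a1 assms in \<open>simp_all add: ys_def\<close>)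
  have ldy: "ld (zAbar n (a + 1) u) (S a (u + 2 * of_nat n - of_nat a - 1))" for u
  proof (cases "a + 1 < n")
    case True
    show ?thesis
      by (rule ld_cong[OF ld_zAbar[of "a+1" u]]) (use True in \<open>simp_all add: ys_def algebra_simps\<close>)
  next
    case False
    then have n: "n = a + 1" using assms by simp
    have e: "a + 1 = n" using n by simp
    show ?thesis unfolding e
      by (rule ld_cong[OF ld_zAbarn[of u]]) (use an' in \<open>simp_all add: ys_def algebra_simps n\<close>)
  qed
  have srel: "S a (u + 2 * of_nat n - of_nat a + 1) = phi (Aa n a (u + 2 * of_nat n - of_nat a)) * S a (u + 2 * of_nat n - of_nat a - 1)" for u
    using S_rel[of a "u + 2 * of_nat n - of_nat a - 1"] a1 an an' by (simp add: dd_def algebra_simps)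
  have I2: "zAbar n (a+1) u = zAbar n a u * Aa n a (u + 2 * of_nat n - of_nat a)" for u
    using I2_mid[of a n u] I2_top[of a n u] a1 assms by (cases "a + 1 < n") auto
  have yv: "yv (dmul (fac (zAbar n a)) (fac (zAbar n (a + 1))))"
    by (intro yv_dmul yv_fac ld_Y[OF ldx] ld_Y[OF ldy])
  have "Sa (dmul (fac (zAbar n a)) (fac (zAbar n (a + 1))) k u) = 0" for k u
  proof -
    have "Sa (- zAbar n a u - zAbar n (a + 1) u) = - Sa (zAbar n a u) - Sa (zAbar n (a + 1) u)"
      by (rule Sa_coef2[OF ld_Y[OF ldx] ld_Y[OF ldy]])
    also have "\<dots> = phi (zAbar n a u) * S a (u + 2 * of_nat n - of_nat a + 1) - phi (zAbar n (a + 1) u) * S a (u + 2 * of_nat n - of_nat a - 1)"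
      unfolding ld_Sa[OF ldx] ld_Sa[OF ldy] by simp
    also have "\<dots> = 0"
      unfolding srel I2[of u] phi_mult by (simp add: algebra_simps)
    finally have c2: "Sa (- zAbar n a u - zAbar n (a + 1) u) = 0" .
    have c4: "Sa (zAbar n a u * zAbar n (a + 1) (u + 2)) = 0"
      using ld_Sa[OF ld_mult[OF ldx[of u] ldy[of "u + 2"]]] by (simp add: algebra_simps)
    show ?thesis unfolding dmul_fac_fac using c2 c4 by (simp add: Sa_one Sa_zero)
  qed
  then show ?thesis using yv unfolding flat_def by blast
qed

lemma Pz_neg: "Pz (\<lambda>v. - c v) k u = (-1) ^ k * Pz c k u"
  unfolding Pz_def by (simp add: prod_uminus)

lemma ring4:
  fixes t1 t2 t3 t4 a0 a1 s0 s1 s3 s4 :: "'q::comm_ring_1"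
  assumes "t1 = t2 * a0" "t3 = t2 * a0 * a1" "t4 = t2 * a1" "s1 = a0 * s0" "s4 = a1 * s3"
  shows "t1 * (s0 - s4) + t2 * (- s1 - s4) + t3 * (s0 + s3) + t4 * (- s1 + s3) = 0"
  unfolding assms by (simp add: algebra_simps)

lemma ring3:
  fixes t1 tx tz a0 a1 s0 s1 s2 :: "'q::comm_ring_1"
  assumes "t1 = tx * a0" "tz = tx * a0 * a1" "s1 = a0 * s0" "s2 = a1 * s1"
  shows "- (t1 * (s0 - s2)) - tx * (- s2 - s1) - tz * (s1 + s0) = 0"
  unfolding assms by (simp add: algebra_simps)

lemma Sa_sign: "x \<in> Yring n \<Longrightarrow> Sa ((-1) ^ j * x) = (-1) ^ j * Sa x"
  by (cases "even j") (auto simp: Sa_neg)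

lemma middle:
  assumes aN: "a = n"
  shows "flat (dmul (dmul (fac (zAbar n n)) (ginv (z0 n))) (fac (zA n n)))"
proof -
  let ?x = "zAbar n n" and ?z = "zA n n" and ?G = "ginv (z0 n)"
  let ?s = "\<lambda>v. S n (v + cc n)"
  have ldW: "ld (Wl n v) (?s v)" for v
    unfolding Wl_def by (rule ld_cong[OF ld_Yp1]) (unfold ys_def, simp_all add: aN)
  have ldWi: "ld (Wil n v) (- ?s v)" for v
    unfolding Wil_def by (rule ld_cong[OF ld_Yp2]) (unfold ys_def, simp_all add: aN)
  have nn: "n - 1 \<noteq> n" "n - 1 \<le> n" using n2 by auto
  have ldY: "ld (Yl n v) 0" for v
    unfolding Yl_def by (rule ld_cong[OF ld_Yp1]) (unfold ys_def, use nn in \<open>simp_all add: aN\<close>)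
  have ldYi: "ld (Yil n v) 0" for v
    unfolding Yil_def by (rule ld_cong[OF ld_Yp2]) (unfold ys_def, use nn in \<open>simp_all add: aN\<close>)
  have ldx: "ld (?x u) (- ?s (u + 2) - ?s (u + 1))" for u
    unfolding zAbarn_W by (rule ld_cong[OF ld_mult[OF ld_mult[OF ldY ldWi] ldWi]]) simp
  have ldz: "ld (?z u) (?s (u + 1) + ?s u)" for u
    unfolding zAn_W by (rule ld_cong[OF ld_mult[OF ld_mult[OF ldW ldW] ldYi]]) simp
  have srel: "?s (v + 1) = phi (Aa n n (v + cc n + 1/2)) * ?s v" for v
    using S_rel[of n "v + cc n"] n2 by (simp add: dd_def algebra_simps)
  have G: "?G j v = (if even j then (-1) ^ (j div 2) * (Wl n v * Wil n (v + 2 * of_nat (j div 2))) else 0)" for j v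
    unfolding ginv_eq Pz_neg Pz_W ..
  have yv: "yv (dmul (dmul (fac ?x) ?G) (fac ?z))"
    by (intro yv_dmul yv_fac yv_ginv ld_Y[OF ldx] ld_Y[OF ldz] Y_diff ld_Y[OF ld_z0])
  have M: "dmul (dmul (fac ?x) ?G) (fac ?z) k u =
     (?G k u - (if 2 \<le> k then ?x u * ?G (k - 2) (u + 2) else 0))
     - (if 2 \<le> k then (?G (k - 2) u - (if 2 \<le> k - 2 then ?x u * ?G (k - 2 - 2) (u + 2) else 0)) * ?z (u + of_nat (k - 2)) else 0)" for k u
    unfolding dmul_fac_right dmul_fac_left ..
  have "Sa (dmul (dmul (fac ?x) ?G) (fac ?z) k u) = 0" for k u
  proof (cases "even k")
    case False
    then have "dmul (dmul (fac ?x) ?G) (fac ?z) k u = 0"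
      unfolding M G by auto
    then show ?thesis by (simp add: Sa_zero)
  next
    case True
    then obtain m where k: "k = 2 * m" by auto
    consider "m = 0" | "m = 1" | j where "m = j + 2"
      by (metis One_nat_def add_2_eq_Suc' not0_implies_Suc)
    then show ?thesis
    proof cases
      case 1
      then have "dmul (dmul (fac ?x) ?G) (fac ?z) k u = 1"
        unfolding M G k by (simp add: W_inv)
      then show ?thesis by (simp add: Sa_one)
    next
      case 2
      have e: "dmul (dmul (fac ?x) ?G) (fac ?z) k u = - Pz (z0 n) 1 u - ?x u - ?z u"
        unfolding M G k 2 Pz_W by (simp add: W_inv)
      let ?A0 = "Aa n n (u + cc n + 1/2)" and ?A1 = "Aa n n (u + 1 + cc n + 1/2)"
      have ldP: "ld (Pz (z0 n) 1 u) (?s u - ?s (u + 2))"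
        unfolding Pz_W by (rule ld_cong[OF ld_mult[OF ldW ldWi]]) simp
      have Ys: "Pz (z0 n) 1 u \<in> Yring n" "?x u \<in> Yring n" "?z u \<in> Yring n"
        using ld_Y[OF ldP] ld_Y[OF ldx] ld_Y[OF ldz] by auto
      have "Sa (- Pz (z0 n) 1 u - ?x u - ?z u) = - Sa (Pz (z0 n) 1 u) - Sa (?x u) - Sa (?z u)"
        using Ys by (simp add: Sa_diff Sa_neg Y_diff Yring.neg)
      also have "\<dots> = - (phi (Pz (z0 n) 1 u) * (?s u - ?s (u + 2))) - phi (?x u) * (- ?s (u + 2) - ?s (u + 1))
           - phi (?z u) * (?s (u + 1) + ?s u)"
        unfolding ld_Sa[OF ldP] ld_Sa[OF ldx] ld_Sa[OF ldz] ..
      also have "\<dots> = 0"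
      proof (rule ring3)
        show "phi (Pz (z0 n) 1 u) = phi (?x u) * phi ?A0"
          using T_ids1(1)[OF n2, of u] phi_mult by simp
        show "phi (?z u) = phi (?x u) * phi ?A0 * phi ?A1"
          using T_ids1(2)[OF n2, of u] phi_mult by simp
        show "?s (u + 1) = phi ?A0 * ?s u" by (rule srel)
        have "u + 2 = (u + 1) + 1" by simp
        then show "?s (u + 2) = phi ?A1 * ?s (u + 1)" using srel[of "u + 1"] by (simp add: algebra_simps)
      qed
      finally show ?thesis unfolding e .
    next
      case 3
      define p where "p = u + 2 * of_nat j"
      have pe: "u + 2 * of_nat (j + 2) = p + 4" "u + 2 + 2 * of_nat (j + 1) = p + 4"
          "u + 2 * of_nat (j + 1) = p + 2" "u + 2 + 2 * of_nat j = p + 2" "u + of_nat (2 * j + 2) = p + 2"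
        unfolding p_def by (simp_all add: algebra_simps)
      define T1 where "T1 = Wl n u * Wil n (p + 4)"
      define T2 where "T2 = ?x u * (Wl n (u + 2) * Wil n (p + 4))"
      define T3 where "T3 = Wl n u * Wil n (p + 2) * ?z (p + 2)"
      define T4 where "T4 = ?x u * (Wl n (u + 2) * Wil n (p + 2)) * ?z (p + 2)"
      have kk: "k = 2 * j + 4" "k - 2 = 2 * j + 2" "k - 2 - 2 = 2 * j" using k 3 by auto
      have e: "dmul (dmul (fac ?x) ?G) (fac ?z) k u = (-1) ^ j * (T1 + T2 + T3 + T4)"
      proof -
        have d: "(2 * j + 4) div 2 = j + 2" "(2 * j + 2) div 2 = j + 1" "(2 * j) div 2 = j" by auto
        show ?thesis
          unfolding M G kk d T1_def T2_def T3_def T4_def p_def by (simp add: algebra_simps)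
      qed
      let ?A0 = "Aa n n (u + cc n + 1/2)" and ?A1 = "Aa n n (p + 3 + cc n + 1/2)"
      have l1: "ld T1 (?s u - ?s (p + 4))"
        unfolding T1_def by (rule ld_cong[OF ld_mult[OF ldW ldWi]]) simp
      have l2: "ld T2 (- ?s (u + 1) - ?s (p + 4))"
        unfolding T2_def by (rule ld_cong[OF ld_mult[OF ldx ld_mult[OF ldW ldWi]]]) simp
      have l3: "ld T3 (?s u + ?s (p + 3))"
        unfolding T3_def by (rule ld_cong[OF ld_mult[OF ld_mult[OF ldW ldWi] ldz]]) (simp add: algebra_simps)
      have l4: "ld T4 (- ?s (u + 1) + ?s (p + 3))"
        unfolding T4_def by (rule ld_cong[OF ld_mult[OF ld_mult[OF ldx ld_mult[OF ldW ldWi]] ldz]]) (simp add: algebra_simps)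
      note Ys = ld_Y[OF l1] ld_Y[OF l2] ld_Y[OF l3] ld_Y[OF l4]
      have "Sa (T1 + T2 + T3 + T4) = Sa T1 + Sa T2 + Sa T3 + Sa T4"
        using Ys by (simp add: Sa_add Yring.add)
      also have "\<dots> = phi T1 * (?s u - ?s (p + 4)) + phi T2 * (- ?s (u + 1) - ?s (p + 4))
          + phi T3 * (?s u + ?s (p + 3)) + phi T4 * (- ?s (u + 1) + ?s (p + 3))"
        unfolding ld_Sa[OF l1] ld_Sa[OF l2] ld_Sa[OF l3] ld_Sa[OF l4] ..
      also have "\<dots> = 0"
      proof (rule ring4)
        show "phi T1 = phi T2 * phi ?A0" using T_ids(1)[OF n2, of u p] phi_mult
          unfolding T1_def T2_def by simp
        show "phi T3 = phi T2 * phi ?A0 * phi ?A1" using T_ids(2)[OF n2, of u p] phi_mult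
          unfolding T3_def T2_def by simp
        show "phi T4 = phi T2 * phi ?A1" using T_ids(3)[OF n2, of u p] phi_mult
          unfolding T4_def T2_def by simp
        show "?s (u + 1) = phi ?A0 * ?s u" by (rule srel)
        have "p + 4 = (p + 3) + 1" by simp
        then show "?s (p + 4) = phi ?A1 * ?s (p + 3)" using srel[of "p + 3"] by (simp add: algebra_simps)
      qed
      finally have "Sa (T1 + T2 + T3 + T4) = 0" .
      then show ?thesis unfolding e using Sa_sign Ys by (simp add: Yring.add)
    qed
  qed
  then show ?thesis using yv unfolding flat_def by blast
qed

end


context scr begin

lemma flat_L: "flat (Lser n)"
proof (cases "a < n")
  case True
  have sp: "[1..<n+1] = [1..<a] @ [a, a+1] @ [a+2..<n+1]"
  proof -
    have "[1..<n+1] = [1..<a] @ [a..<a + (n + 1 - a)]" using a1 True upt_add_eq_append[of 1 a "n + 1 - a"] by simp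
    also have "a + (n + 1 - a) = n + 1" using True by simp
    also have "[a..<n+1] = a # (a+1) # [a+2..<n+1]" using True by (simp add: upt_conv_Cons)
    finally show ?thesis by simp
  qed
  have fl: "flat (dprod (map (\<lambda>b. fac (zAbar n b)) [1..<n+1]))"
    unfolding sp map_append list.map
    by (rule flat_dprod_pair[OF _ _ pairL[OF True]]) (use an in \<open>auto intro!: flat_fzAbar\<close>)
  have rsp: "rev [1..<n+1] = rev [a+2..<n+1] @ [a+1, a] @ rev [1..<a]"
    unfolding sp by simp
  have fr: "flat (dprod (map (\<lambda>b. fac (zA n b)) (rev [1..<n+1])))"
    unfolding rsp map_append list.map
    by (rule flat_dprod_pair[OF _ _ pairR[OF True]])
       (use an in \<open>auto intro!: flat_fzA\<close>)
  show ?thesis unfolding Lser_def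
    by (intro flat_dmul fl fr flat_G) (use True in simp)
next
  case False
  then have aN: "a = n" using an by simp
  have sp: "[1..<n+1] = [1..<n] @ [n]" using n2 by simp
  let ?P = "dprod (map (\<lambda>b. fac (zAbar n b)) [1..<n])"
  let ?Q = "dprod (map (\<lambda>b. fac (zA n b)) (rev [1..<n]))"
  have e: "Lser n = dmul ?P (dmul (dmul (dmul (fac (zAbar n n)) (ginv (z0 n))) (fac (zA n n))) ?Q)"
    unfolding Lser_def sp map_append rev_append list.map rev.simps dprod_append
    by (simp add: dprod_def dmul_dunit_right dmul_dunit_left dmul_assoc)
  have fP: "flat ?P" by (rule flat_dprod) (auto intro!: flat_fzAbar simp: aN)
  have fQ: "flat ?Q" by (rule flat_dprod) (auto intro!: flat_fzA simp: aN)
  show ?thesis unfolding e by (intro flat_dmul fP fQ middle aN)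
qed

end

theorem mainTheorem11:
  fixes n a :: nat
    and phi :: "lpoly \<Rightarrow> 'r::comm_ring_1"
    and S :: "nat \<Rightarrow> complex \<Rightarrow> 'r"
    and Sa :: "lpoly \<Rightarrow> 'r"
  assumes n2: "n \<ge> 2"
    and a_range: "1 \<le> a" "a \<le> n"
    and phi_one: "phi 1 = 1"
    and phi_add: "\<And>x y. phi (x + y) = phi x + phi y"
    and phi_mult: "\<And>x y. phi (x * y) = phi x * phi y"
    and S_rel: "\<And>b u. 1 \<le> b \<Longrightarrow> b \<le> n \<Longrightarrow>
                  S b (u + dd n b) = phi (Aa n b (u + dd n b / 2)) * S b u"
    and Sa_add: "\<And>x y. x \<in> Yring n \<Longrightarrow> y \<in> Yring n \<Longrightarrow> Sa (x + y) = Sa x + Sa y"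
    and Sa_leibniz: "\<And>x y. x \<in> Yring n \<Longrightarrow> y \<in> Yring n \<Longrightarrow>
                  Sa (x * y) = Sa x * phi y + phi x * Sa y"
    and Sa_gen: "\<And>b u. 1 \<le> b \<Longrightarrow> b \<le> n \<Longrightarrow>
                  Sa (Yp n b u 1) = (if b = a then phi (Yp n b u 1) * S b u else 0)"
  shows "\<forall>j u. Sa (Lser n j u) = 0"
proof -
  interpret scr n a phi S Sa
    using assms by unfold_locales auto
  show ?thesis using flat_L unfolding flat_def by blast
qed


end
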